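(* Let $\alpha\approx1.46557$ be the real root of $x^3-x^2-1$ between $1$ and $2$. Every forest of order $n$ has at most $\alpha^n$ induced matchings, and the number of induced matchings of the path on $n$ vertices is $\Theta(\alpha^n)$.
   Context: An induced matching of a graph $G=(V,E)$ is here a set $D\subseteq V$ such that every vertex of $D$ has exactly one neighbour in $D$ (a $(\{1\},\mathbb{N})$-dominating set); the empty set counts. Order = number of vertices. *)

theory Defs
  imports Complex_Main "HOL-Library.Landau_Symbols"
begin

definition simple_graph :: "'a set \<Rightarrow> ('a \<Rightarrow> 'a \<Rightarrow> bool) \<Rightarrow> bool" where
  "simple_graph V E \<longleftrightarrow> finite V \<and> (\<forall>x y. E x y \<longrightarrow> x \<in> V \<and> y \<in> V)
     \<and> (\<forall>x y. E x y \<longrightarrow> E y x) \<and> (\<forall>x. \<not> E x x)"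

definition is_cycle :: "('a \<Rightarrow> 'a \<Rightarrow> bool) \<Rightarrow> 'a list \<Rightarrow> bool" where
  "is_cycle E cs \<longleftrightarrow> length cs \<ge> 3 \<and> distinct cs
     \<and> (\<forall>i. Suc i < length cs \<longrightarrow> E (cs ! i) (cs ! Suc i))
     \<and> E (last cs) (hd cs)"

definition forest :: "'a set \<Rightarrow> ('a \<Rightarrow> 'a \<Rightarrow> bool) \<Rightarrow> bool" where
  "forest V E \<longleftrightarrow> simple_graph V E \<and> (\<nexists>cs. set cs \<subseteq> V \<and> is_cycle E cs)"

definition induced_matching :: "'a set \<Rightarrow> ('a \<Rightarrow> 'a \<Rightarrow> bool) \<Rightarrow> 'a set \<Rightarrow> bool" where
  "induced_matching V E D \<longleftrightarrow> D \<subseteq> V \<and> (\<forall>v\<in>D. card {u\<in>D. E v u} = 1)"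

definition num_induced_matchings :: "'a set \<Rightarrow> ('a \<Rightarrow> 'a \<Rightarrow> bool) \<Rightarrow> nat" where
  "num_induced_matchings V E = card {D. induced_matching V E D}"

definition path_adj :: "nat \<Rightarrow> nat \<Rightarrow> bool" where
  "path_adj i j \<longleftrightarrow> i + 1 = j \<or> j + 1 = i"

definition alpha :: real where
  "alpha = (THE x. 1 < x \<and> x < 2 \<and> x ^ 3 - x ^ 2 - 1 = 0)"

end

theory Submission
  imports Defs
begin

lemma alpha_unique_aux:
  fixes x y :: real
  assumes "1 < x" "x < y"
  shows "x^2 * (x - 1) < y^2 * (y - 1)"
proof -
  have "x^2 < y^2" using assms by (intro power_strict_mono) auto
  moreover have "x - 1 < y - 1" using assms by simp
  ultimately show ?thesis using assms
    by (intro mult_strict_mono) auto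
qed

lemma alpha_props: "1 < alpha \<and> alpha < 2 \<and> alpha^3 = alpha^2 + 1"
proof -
  let ?p = "\<lambda>x::real. x ^ 3 - x ^ 2 - 1"
  have "\<exists>x\<ge>1. x \<le> 2 \<and> ?p x = 0"
    by (rule IVT) (auto intro!: continuous_intros)
  then obtain x where x: "1 \<le> x" "x \<le> 2" "?p x = 0" by blast
  have x1: "x \<noteq> 1" "x \<noteq> 2" using x by auto
  have ex: "1 < x \<and> x < 2 \<and> ?p x = 0" using x x1 by auto
  have uniq: "y = x" if y: "1 < y \<and> y < 2 \<and> ?p y = 0" for y
  proof (rule ccontr)
    assume "y \<noteq> x"
    hence "y < x \<or> x < y" by auto
    moreover have "y^2 * (y - 1) = 1" "x^2*(x-1) = 1" using y ex by (auto simp: algebra_simps power3_eq_cube power2_eq_square)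
    ultimately show False
    proof (elim disjE)
      assume "y < x" thus False using alpha_unique_aux[of y x] y \<open>y^2 * (y - 1) = 1\<close> \<open>x^2*(x-1) = 1\<close> by linarith
    next
      assume "x < y" thus False using alpha_unique_aux[of x y] ex \<open>y^2 * (y - 1) = 1\<close> \<open>x^2*(x-1) = 1\<close> by linarith
    qed
  qed
  have "alpha = x" unfolding alpha_def
  proof (rule the_equality)
    show "1 < x \<and> x < 2 \<and> x ^ 3 - x ^ 2 - 1 = 0" by (rule ex)
    fix y :: real assume "1 < y \<and> y < 2 \<and> y ^ 3 - y ^ 2 - 1 = 0"
    thus "y = x" by (rule uniq)
  qed
  thus ?thesis using ex by auto
qed

lemma forest_low:
  assumes F: "forest V E" and T: "T \<subseteq> V" "T \<noteq> {}"
  shows "\<exists>v\<in>T. card {u\<in>T. E v u} \<le> 1"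
proof (rule ccontr)
  assume "\<not> ?thesis"
  hence deg: "\<forall>v\<in>T. 2 \<le> card {u\<in>T. E v u}" by auto
  have sg: "simple_graph V E" and nocyc: "\<nexists>cs. set cs \<subseteq> V \<and> is_cycle E cs"
    using F unfolding forest_def by auto
  have "finite V" using sg unfolding simple_graph_def by auto
  hence finT: "finite T" using finite_subset[OF T(1)] by blast
  have sym: "\<And>x y. E x y \<Longrightarrow> E y x" and irr: "\<And>x. \<not> E x x" using sg unfolding simple_graph_def by auto
  define P where "P xs \<longleftrightarrow> xs \<noteq> [] \<and> distinct xs \<and> set xs \<subseteq> T \<and> (\<forall>i. Suc i < length xs \<longrightarrow> E (xs!i) (xs!Suc i))" for xs
  obtain t where t: "t \<in> T" using T by auto
  have Pt: "P [t]" using t unfolding P_def by auto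
  have bnd: "\<forall>ys. P ys \<longrightarrow> length ys < card T + 1"
  proof (intro allI impI)
    fix ys assume "P ys"
    hence ys: "set ys \<subseteq> T" "distinct ys" unfolding P_def by auto
    have "card (set ys) \<le> card T" by (rule card_mono[OF finT ys(1)])
    moreover have "card (set ys) = length ys" by (rule distinct_card[OF ys(2)])
    ultimately show "length ys < card T + 1" by simp
  qed
  obtain xs where Pxs: "P xs" and mx: "\<forall>ys. P ys \<longrightarrow> length ys \<le> length xs"
    using ex_has_greatest_nat[of P "[t]" length "card T + 1", OF Pt bnd] by blast
  have xs: "xs \<noteq> []" "distinct xs" "set xs \<subseteq> T" "\<And>i. Suc i < length xs \<Longrightarrow> E (xs!i) (xs!Suc i)"
    using Pxs unfolding P_def by auto
  have x0T: "xs!0 \<in> T" using xs by auto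
  have nb: "y \<in> set xs" if "y \<in> T" "E (xs!0) y" for y
  proof (rule ccontr)
    assume ny: "y \<notin> set xs"
    have "P (y # xs)" unfolding P_def
    proof (intro conjI allI impI)
      show "distinct (y#xs)" using ny xs by auto
      show "set (y#xs) \<subseteq> T" using xs that by auto
      fix i assume i: "Suc i < length (y#xs)"
      show "E ((y # xs) ! i) ((y # xs) ! Suc i)"
      proof (cases i)
        case 0 thus ?thesis using sym[OF that(2)] by simp
      next
        case (Suc k)
        hence "Suc k < length xs" using i by simp
        thus ?thesis using xs(4)[of k] Suc by simp
      qed
    qed simp
    hence "length (y#xs) \<le> length xs" using mx by blast
    thus False by simp
  qed
  have "2 \<le> card {u\<in>T. E (xs!0) u}" using deg x0T by auto
  moreover have "finite {u\<in>T. E (xs!0) u}" using finT by simp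
  ultimately have "\<not>(\<forall>a\<in>{u\<in>T. E (xs!0) u}. \<forall>b\<in>{u\<in>T. E (xs!0) u}. a = b)"
    using card_le_Suc0_iff_eq[of "{u\<in>T. E (xs!0) u}"] by linarith
  then obtain a b where ab: "a \<in> {u\<in>T. E (xs!0) u}" "b \<in> {u\<in>T. E (xs!0) u}" "a \<noteq> b"
    by blast
  have "a \<in> set xs" "b \<in> set xs" using nb ab by auto
  then obtain ja jb where ja: "ja < length xs" "xs!ja = a" and jb: "jb < length xs" "xs!jb = b"
    unfolding in_set_conv_nth by blast
  have Ea: "E (xs!0) (xs!ja)" and Eb: "E (xs!0) (xs!jb)" using ja jb ab by auto
  have ja0: "ja \<noteq> 0"
  proof
    assume "ja = 0" thus False using Ea irr by metis
  qed
  have jb0: "jb \<noteq> 0"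
  proof
    assume "jb = 0" thus False using Eb irr by metis
  qed
  have jab: "ja \<noteq> jb" using ja jb ab by auto
  obtain j where j: "2 \<le> j" "j < length xs" "E (xs!0) (xs!j)"
  proof (cases "2 \<le> ja")
    case True thus ?thesis using that ja Ea by blast
  next
    case False
    hence "2 \<le> jb" using ja0 jb0 jab by linarith
    thus ?thesis using that jb Eb by blast
  qed
  define cs where "cs = take (Suc j) xs"
  have lcs: "length cs = Suc j" using j unfolding cs_def by auto
  have "is_cycle E cs" unfolding is_cycle_def
  proof (intro conjI allI impI)
    show "3 \<le> length cs" using lcs j by simp
    show "distinct cs" unfolding cs_def using xs by simp
    fix i assume "Suc i < length cs"
    thus "E (cs ! i) (cs ! Suc i)" using lcs xs(4)[of i] j unfolding cs_def by auto
  next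
    have "cs \<noteq> []" using lcs by auto
    hence "last cs = cs ! j" using lcs by (simp add: last_conv_nth)
    also have "\<dots> = xs ! j" unfolding cs_def by simp
    finally have "last cs = xs!j" .
    moreover have "hd cs = xs!0"
    proof -
      have "hd cs = cs!0" using \<open>cs \<noteq> []\<close> by (simp add: hd_conv_nth)
      also have "\<dots> = xs!0" unfolding cs_def by simp
      finally show ?thesis .
    qed
    ultimately show "E (last cs) (hd cs)" using sym j by auto
  qed
  moreover have "set cs \<subseteq> set xs" unfolding cs_def by (rule set_take_subset)
  hence "set cs \<subseteq> V" using xs(3) T(1) by blast
  ultimately show False using nocyc by blast
qed

lemma alpha_sq: "2 \<le> alpha^2"
proof (rule ccontr)
  assume "\<not> 2 \<le> alpha^2"
  hence lt: "alpha^2 < 2" by simp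
  have a: "1 < alpha" "alpha^3 = alpha^2 + 1" using alpha_props by auto
  have "alpha < 1.42"
  proof (rule ccontr)
    assume "\<not> alpha < 1.42"
    hence "1.42^2 \<le> alpha^2" by (intro power_mono) auto
    thus False using lt by (simp add: power2_eq_square)
  qed
  hence "alpha^2 * (alpha - 1) < 2 * 0.42" using lt a by (intro mult_strict_mono) auto
  moreover have "alpha^2 * (alpha - 1) = 1" using a by (simp add: algebra_simps power3_eq_cube power2_eq_square)
  ultimately show False by simp
qed

lemma ims_finite: "finite S \<Longrightarrow> finite {D. induced_matching S E D}"
  by (rule finite_subset[of _ "Pow S"]) (auto simp: induced_matching_def)

lemma ims_card_pos: "finite S \<Longrightarrow> 1 \<le> card {D. induced_matching S E D}"
proof -
  assume "finite S"
  moreover have "{} \<in> {D. induced_matching S E D}" by (simp add: induced_matching_def)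
  ultimately show ?thesis using ims_finite[of S E]
    by (metis One_nat_def Suc_leI card_gt_0_iff empty_iff)
qed

lemma main_bound:
  fixes E :: "'a \<Rightarrow> 'a \<Rightarrow> bool"
  assumes sym: "\<And>x y. E x y \<Longrightarrow> E y x" and irr: "\<And>x. \<not> E x x"
    and low: "\<And>T. T \<subseteq> V \<Longrightarrow> T \<noteq> {} \<Longrightarrow> \<exists>v\<in>T. card {u\<in>T. E v u} \<le> 1"
    and fin: "finite V"
  shows "S \<subseteq> V \<Longrightarrow> real (card {D. induced_matching S E D}) \<le> alpha ^ card S"
proof (induction "card S" arbitrary: S rule: less_induct)
  case less
  define M where "M X = {D. induced_matching X E D}" for X
  have IH: "real (card (M X)) \<le> alpha ^ card X" if "X \<subseteq> S" "card X < card S" for X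
  proof -
    have "X \<subseteq> V" using that(1) less.prems by (rule order.trans)
    thus ?thesis using less.hyps[of X] that(2) unfolding M_def by simp
  qed
  have finS: "finite S" using fin less.prems finite_subset by blast
  have finM: "finite (M X)" if "X \<subseteq> S" for X
    unfolding M_def using ims_finite finS that finite_subset by blast
  have a1: "1 < alpha" and a3: "alpha^3 = alpha^2 + 1" using alpha_props by auto
  have a2: "2 \<le> alpha^2" by (rule alpha_sq)
  have MS: "D \<subseteq> X \<and> (\<forall>w\<in>D. card {x\<in>D. E w x} = 1)" if "D \<in> M X" for D X
    using that unfolding M_def induced_matching_def by auto
  have MI: "D \<in> M X" if "D \<subseteq> X" "\<forall>w\<in>D. card {x\<in>D. E w x} = 1" for D X
    using that unfolding M_def induced_matching_def by auto
  show ?case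
  proof (cases "S = {}")
    case True
    have "M S = {{}}" unfolding M_def induced_matching_def using True by auto
    thus ?thesis using True M_def by simp
  next
    case False
    obtain v where v: "v \<in> S" "card {u\<in>S. E v u} \<le> 1" using low[OF less.prems False] by blast
    have Sv: "card (S - {v}) < card S" using card_Diff1_less[OF finS v(1)] .
    show ?thesis
    proof (cases "card {u\<in>S. E v u} = 0")
      case True
      hence emp: "{u\<in>S. E v u} = {}" using finS by simp
      have "M S \<subseteq> M (S - {v})"
      proof
        fix D assume "D \<in> M S"
        hence D: "D \<subseteq> S" "\<forall>w\<in>D. card {u\<in>D. E w u} = 1" using MS by auto
        have "v \<notin> D"
        proof
          assume "v \<in> D"
          hence "card {u\<in>D. E v u} = 1" using D by auto
          moreover have "{u\<in>D. E v u} = {}" using emp D by auto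
          ultimately show False by simp
        qed
        thus "D \<in> M (S - {v})" using D by (intro MI) auto
      qed
      hence "card (M S) \<le> card (M (S - {v}))" using finM[of "S - {v}"] card_mono by blast
      hence "real (card (M S)) \<le> alpha ^ card (S - {v})" using IH[of "S - {v}"] Sv by force
      also have "\<dots> \<le> alpha ^ card S" using Sv a1 by (intro power_increasing) auto
      finally show ?thesis unfolding M_def .
    next
      case False
      hence "card {u\<in>S. E v u} = 1" using v by simp
      then obtain u where u: "{u\<in>S. E v u} = {u}" by (rule card_1_singletonE)
      have uS: "u \<in> S" and Evu: "E v u" using u by auto
      have Euv: "E u v" using sym Evu by blast
      have uv: "u \<noteq> v" using irr Evu by blast
      define N where "N = {w\<in>S. E u w}"
      have vN: "v \<in> N" using Euv v N_def by auto
      have NS: "N \<subseteq> S" using N_def by auto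
      have uN: "u \<notin> N" using irr N_def by auto
      have uNS: "insert u N \<subseteq> S" using uS NS by auto
      have key: "u \<in> D \<and> D - {u,v} \<in> M (S - insert u N)" if D: "D \<in> M S" "v \<in> D" for D
      proof -
        have DS: "D \<subseteq> S" and c: "\<And>w. w\<in>D \<Longrightarrow> card {x\<in>D. E w x} = 1" using MS D by auto
        have "card {x\<in>D. E v x} = 1" using c D by auto
        moreover have "{x\<in>D. E v x} \<subseteq> {u}" using u DS by auto
        moreover obtain z where z: "{x\<in>D. E v x} = {z}" using \<open>card {x\<in>D. E v x} = 1\<close> by (rule card_1_singletonE)
        ultimately have Nv: "{x\<in>D. E v x} = {u}" by simp
        hence uD: "u \<in> D" by auto
        have "card {x\<in>D. E u x} = 1" using c uD by auto
        moreover have "v \<in> {x\<in>D. E u x}" using D Euv by auto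
        moreover obtain z where z: "{x\<in>D. E u x} = {z}" using \<open>card {x\<in>D. E u x} = 1\<close> by (rule card_1_singletonE)
        ultimately have Nu: "{x\<in>D. E u x} = {v}" by simp
        have sub: "D - {u,v} \<subseteq> S - insert u N"
        proof
          fix w assume w: "w \<in> D - {u,v}"
          have "w \<notin> N"
          proof
            assume "w \<in> N"
            hence "w \<in> {x\<in>D. E u x}" using w N_def by auto
            thus False using Nu w by auto
          qed
          thus "w \<in> S - insert u N" using w DS by auto
        qed
        have "\<forall>w\<in>D - {u,v}. card {x\<in>D - {u,v}. E w x} = 1"
        proof
          fix w assume w: "w \<in> D - {u,v}"
          have "{x\<in>D - {u,v}. E w x} = {x\<in>D. E w x}"
          proof (intro set_eqI iffI)
            fix x assume x: "x \<in> {x\<in>D. E w x}"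
            have "x \<noteq> u"
            proof
              assume "x = u"
              hence "w \<in> {x\<in>D. E u x}" using x w sym by auto
              thus False using Nu w by auto
            qed
            moreover have "x \<noteq> v"
            proof
              assume "x = v"
              hence "w \<in> {x\<in>D. E v x}" using x w sym by auto
              thus False using Nv w by auto
            qed
            ultimately show "x \<in> {x\<in>D - {u,v}. E w x}" using x by auto
          qed auto
          thus "card {x\<in>D - {u,v}. E w x} = 1" using c w by auto
        qed
        thus ?thesis using uD sub MI by auto
      qed
      have split: "M S \<subseteq> {D\<in>M S. v\<notin>D} \<union> (\<lambda>D. insert u (insert v D)) ` M (S - insert u N)"
      proof
        fix D assume D: "D \<in> M S"
        show "D \<in> {D\<in>M S. v\<notin>D} \<union> (\<lambda>D. insert u (insert v D)) ` M (S - insert u N)"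
        proof (cases "v \<in> D")
          case True
          hence "D = insert u (insert v (D - {u,v}))" using key[OF D True] by auto
          thus ?thesis using key[OF D True] by blast
        qed (use D in auto)
      qed
      have f1: "finite {D\<in>M S. v\<notin>D}" using finM[of S] by auto
      have f2: "finite (M (S - insert u N))" using finM[of "S - insert u N"] by auto
      have "card (M S) \<le> card ({D\<in>M S. v\<notin>D} \<union> (\<lambda>D. insert u (insert v D)) ` M (S - insert u N))"
        using split f1 f2 by (intro card_mono) auto
      also have "\<dots> \<le> card {D\<in>M S. v\<notin>D} + card ((\<lambda>D. insert u (insert v D)) ` M (S - insert u N))"
        by (rule card_Un_le)
      also have "\<dots> \<le> card {D\<in>M S. v\<notin>D} + card (M (S - insert u N))"
        using card_image_le[OF f2] by simp
      finally have cle: "card (M S) \<le> card {D\<in>M S. v\<notin>D} + card (M (S - insert u N))" .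
      have cN: "card (S - insert u N) = card S - card (insert u N)"
        by (rule card_Diff_subset[OF finite_subset[OF uNS finS] uNS])
      have finN: "finite (insert u N)" by (rule finite_subset[OF uNS finS])
      show ?thesis
      proof (cases "N = {v}")
        case True
        have A2: "{D\<in>M S. v\<notin>D} \<subseteq> M (S - {u,v})"
        proof
          fix D assume D: "D \<in> {D\<in>M S. v\<notin>D}"
          hence DS: "D \<subseteq> S" and c: "\<And>w. w\<in>D \<Longrightarrow> card {x\<in>D. E w x} = 1" and vD: "v \<notin> D"
            using MS by auto
          have "u \<notin> D"
          proof
            assume uD: "u \<in> D"
            have "{x\<in>D. E u x} = {}" using True N_def DS vD by auto
            hence "card {x\<in>D. E u x} = 0" by (simp only: card.empty)
            thus False using c[OF uD] by simp
          qed
          thus "D \<in> M (S - {u,v})" using DS c vD by (intro MI) auto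
        qed
        have iN: "insert u N = {u,v}" using True by auto
        have c2: "card {u,v} = 2" using uv by simp
        have "card {u,v} \<le> card S" by (rule card_mono[OF finS]) (use uNS iN in simp)
        hence cS: "2 \<le> card S" using c2 by simp
        have lt2: "card (S - {u,v}) < card S" using cN iN c2 cS by simp
        have "card {D\<in>M S. v\<notin>D} \<le> card (M (S - {u,v}))" using A2 finM[of "S - {u,v}"] card_mono by blast
        hence "card (M S) \<le> 2 * card (M (S - {u,v}))" using cle iN by simp
        hence "real (card (M S)) \<le> 2 * alpha ^ card (S - {u,v})"
          using IH[of "S - {u,v}"] lt2 by force
        also have "\<dots> \<le> alpha^2 * alpha ^ card (S - {u,v})" using a2 a1 by (intro mult_right_mono) auto
        also have "\<dots> = alpha ^ card S"
        proof -
          have e: "2 + card (S - {u,v}) = card S" using cN iN c2 cS by simp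
          show ?thesis by (simp only: power_add[symmetric] e)
        qed
        finally show ?thesis unfolding M_def .
      next
        case False
        obtain w where w: "w \<in> N" "w \<noteq> v" using False vN by blast
        have wu: "w \<noteq> u" using w uN by auto
        have "card {u,v,w} = 3" using uv wu w by auto
        moreover have "{u,v,w} \<subseteq> insert u N" using vN w by auto
        moreover have "card {u,v,w} \<le> card (insert u N)" by (rule card_mono[OF finN]) (use vN w in simp)
        ultimately have c3: "3 \<le> card (insert u N)" by simp
        have cS: "card (insert u N) \<le> card S" by (rule card_mono[OF finS uNS])
        define m where "m = card S - 3"
        have m: "card S = m + 3" using c3 cS unfolding m_def by simp
        have l3: "card (S - insert u N) \<le> m" using cN c3 m by simp
        have lt3: "card (S - insert u N) < card S" using l3 m by simp
        have "card {D\<in>M S. v\<notin>D} \<le> card (M (S - {v}))"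
        proof (rule card_mono)
          show "finite (M (S - {v}))" using finM[of "S - {v}"] by blast
          show "{D\<in>M S. v\<notin>D} \<subseteq> M (S - {v})"
          proof
            fix D assume "D \<in> {D\<in>M S. v\<notin>D}"
            hence D: "D \<in> M S" "v \<notin> D" by auto
            have "D \<subseteq> S - {v}" using MS[OF D(1)] D(2) by blast
            moreover have "\<forall>w\<in>D. card {x\<in>D. E w x} = 1" using MS[OF D(1)] by blast
            ultimately show "D \<in> M (S - {v})" by (rule MI)
          qed
        qed
        hence "real (card (M S)) \<le> real (card (M (S - {v}))) + real (card (M (S - insert u N)))"
          using cle by linarith
        also have "\<dots> \<le> alpha ^ card (S - {v}) + alpha ^ card (S - insert u N)"
          using IH[of "S - {v}"] IH[of "S - insert u N"] Sv lt3 by force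
        also have "\<dots> \<le> alpha ^ (m + 2) + alpha ^ m"
        proof -
          have "card (S - {v}) = m + 2" using m v finS by simp
          moreover have "alpha ^ card (S - insert u N) \<le> alpha ^ m" using l3 a1 by (intro power_increasing) auto
          ultimately show ?thesis by simp
        qed
        also have "\<dots> = alpha ^ m * (alpha^2 + 1)" by (simp add: algebra_simps power_add power2_eq_square)
        also have "\<dots> = alpha ^ card S" using a3 m by (simp add: power_add)
        finally show ?thesis unfolding M_def .
      qed
    qed
  qed
qed


lemma path_low:
  assumes "T \<subseteq> {0..<n}" "T \<noteq> {}"
  shows "\<exists>v\<in>T. card {u\<in>T. path_adj v u} \<le> 1"
proof -
  have fT: "finite T" using assms finite_subset by blast
  let ?v = "Max T"
  have vT: "?v \<in> T" using fT assms by simp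
  have "{u\<in>T. path_adj ?v u} \<subseteq> {?v - 1}"
  proof
    fix u assume u: "u \<in> {u\<in>T. path_adj ?v u}"
    hence "u \<le> ?v" using fT by simp
    thus "u \<in> {?v - 1}" using u unfolding path_adj_def by auto
  qed
  hence "card {u\<in>T. path_adj ?v u} \<le> card {?v - 1}" by (intro card_mono) auto
  thus ?thesis using vT by auto
qed

lemma path_rec:
  "card {D. induced_matching {0..<n+2} path_adj D} + card {D. induced_matching {0..<n} path_adj D}
   \<le> card {D. induced_matching {0..<n+3} path_adj D}"
proof -
  define P where "P k = {D. induced_matching {0..<k} path_adj D}" for k
  have PS: "D \<subseteq> {0..<k} \<and> (\<forall>w\<in>D. card {x\<in>D. path_adj w x} = 1)" if "D \<in> P k" for D k
    using that unfolding P_def induced_matching_def by auto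
  have PI: "D \<in> P k" if "D \<subseteq> {0..<k}" "\<forall>w\<in>D. card {x\<in>D. path_adj w x} = 1" for D k
    using that unfolding P_def induced_matching_def by auto
  define g where "g D = insert (n+1) (insert (n+2) D)" for D :: "nat set"
  have fin: "finite (P k)" for k unfolding P_def by (rule ims_finite) simp
  have A: "P (n+2) \<subseteq> P (n+3)"
  proof
    fix D assume "D \<in> P (n+2)"
    hence "D \<subseteq> {0..<n+3}" "\<forall>w\<in>D. card {x\<in>D. path_adj w x} = 1" using PS by force+
    thus "D \<in> P (n+3)" using PI by blast
  qed
  have B: "g ` P n \<subseteq> P (n+3)"
  proof
    fix D' assume "D' \<in> g ` P n"
    then obtain D where D: "D \<in> P n" "D' = g D" by blast
    have DS: "\<forall>x\<in>D. x < n" and c: "\<And>w. w \<in> D \<Longrightarrow> card {x\<in>D. path_adj w x} = 1"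
      using PS[OF D(1)] by auto
    have "\<forall>w\<in>D'. card {x\<in>D'. path_adj w x} = 1"
    proof
      fix w assume w: "w \<in> D'"
      show "card {x\<in>D'. path_adj w x} = 1"
      proof (cases "w \<in> D")
        case True
        have "{x\<in>D'. path_adj w x} = {x\<in>D. path_adj w x}"
          using DS True unfolding D(2) g_def path_adj_def by force
        thus ?thesis using c True by simp
      next
        case False
        hence "w = n+1 \<or> w = n+2" using w D(2) g_def by auto
        hence "{x\<in>D'. path_adj w x} = {if w = n+1 then n+2 else n+1}"
          using DS unfolding D(2) g_def path_adj_def by force
        thus ?thesis by simp
      qed
    qed
    moreover have "D' \<subseteq> {0..<n+3}" using DS unfolding D(2) g_def by auto
    ultimately show "D' \<in> P (n+3)" using PI by blast
  qed
  have disj: "P (n+2) \<inter> g ` P n = {}"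
  proof -
    have "n+2 \<notin> D" if "D \<in> P (n+2)" for D using PS[OF that] by auto
    moreover have "n+2 \<in> D" if "D \<in> g ` P n" for D using that g_def by auto
    ultimately show ?thesis by blast
  qed
  have inj: "inj_on g (P n)"
  proof (rule inj_onI)
    fix D1 D2 assume D: "D1 \<in> P n" "D2 \<in> P n" "g D1 = g D2"
    have "D1 = g D1 - {n+1, n+2}" "D2 = g D2 - {n+1,n+2}" using PS[OF D(1)] PS[OF D(2)] g_def by auto
    thus "D1 = D2" using D(3) by simp
  qed
  have "card (P (n+2)) + card (P n) = card (P (n+2) \<union> g ` P n)"
    using card_Un_disjoint[OF fin finite_imageI[OF fin] disj] card_image[OF inj] by simp
  also have "\<dots> \<le> card (P (n+3))" using A B fin by (intro card_mono) auto
  finally show ?thesis unfolding P_def .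
qed

theorem mainTheorem18:
  shows "(\<forall>(V :: 'a set) E n. forest V E \<and> card V = n \<longrightarrow>
            real (num_induced_matchings V E) \<le> alpha ^ n)
       \<and> (\<lambda>n. real (num_induced_matchings {0..<n} path_adj)) \<in> \<Theta>(\<lambda>n. alpha ^ n)"
proof
  show "\<forall>(V :: 'a set) E n. forest V E \<and> card V = n \<longrightarrow>
            real (num_induced_matchings V E) \<le> alpha ^ n"
  proof (intro allI impI)
    fix V :: "'a set" and E n assume a: "forest V E \<and> card V = n"
    hence sg: "simple_graph V E" unfolding forest_def by auto
    have "real (card {D. induced_matching V E D}) \<le> alpha ^ card V"
      by (rule main_bound[of E V V]) (use sg a forest_low in \<open>auto simp: simple_graph_def\<close>)
    thus "real (num_induced_matchings V E) \<le> alpha ^ n" using a unfolding num_induced_matchings_def by simp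
  qed
next
  define f where "f n = real (num_induced_matchings {0..<n} path_adj)" for n
  have a1: "1 < alpha" and a3: "alpha^3 = alpha^2 + 1" using alpha_props by auto
  have up: "f n \<le> alpha ^ n" for n
  proof -
    have "real (card {D. induced_matching {0..<n} path_adj D}) \<le> alpha ^ card {0..<n}"
      by (rule main_bound[of path_adj "{0..<n}"]) (use path_low in \<open>auto simp: path_adj_def\<close>)
    thus ?thesis unfolding f_def num_induced_matchings_def by simp
  qed
  have f1: "1 \<le> f n" for n unfolding f_def num_induced_matchings_def using ims_card_pos[of "{0..<n}" path_adj] by simp
  have fr: "f (m+2) + f m \<le> f (m+3)" for m
    unfolding f_def num_induced_matchings_def using path_rec[of m] by linarith
  have lowb: "alpha ^ n \<le> alpha^2 * f n" for n
  proof (induction n rule: less_induct)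
    case (less n)
    show ?case
    proof (cases "n < 3")
      case True
      have "alpha ^ n \<le> alpha^2" using True a1 by (intro power_increasing) auto
      also have "\<dots> \<le> alpha^2 * f n" using f1[of n] a1 by simp
      finally show ?thesis .
    next
      case False
      then obtain m where m: "n = m + 3" by (metis add.commute le_Suc_ex not_less)
      have "alpha ^ n = alpha ^ m * alpha ^ 3" using m by (simp add: power_add)
      also have "\<dots> = alpha ^ m * alpha ^ 2 + alpha ^ m" using a3 by (simp add: algebra_simps)
      also have "\<dots> = alpha ^ (m+2) + alpha ^ m" by (simp add: power_add power2_eq_square)
      finally have "alpha ^ n = alpha ^ (m+2) + alpha ^ m" .
      also have "\<dots> \<le> alpha^2 * f (m+2) + alpha^2 * f m"
      proof (rule add_mono)
        show "alpha ^ (m+2) \<le> alpha^2 * f (m+2)" by (rule less) (use m in simp)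
        show "alpha ^ m \<le> alpha^2 * f m" by (rule less) (use m in simp)
      qed
      also have "\<dots> \<le> alpha^2 * f n" using fr[of m] m a1
        by (simp add: distrib_left[symmetric])
      finally show ?thesis .
    qed
  qed
  have "f \<in> \<Theta>(\<lambda>n. alpha ^ n)"
  proof (rule bigthetaI'[of "1 / alpha^2" 1])
    show "0 < 1 / alpha^2" using a1 by simp
    show "0 < (1::real)" by simp
    show "\<forall>\<^sub>F x in at_top. 1 / alpha\<^sup>2 * norm (alpha ^ x) \<le> norm (f x) \<and> norm (f x) \<le> 1 * norm (alpha ^ x)"
    proof (rule always_eventually, rule allI)
      fix x
      have fp: "0 \<le> f x" using f1[of x] by simp
      have ap: "0 < alpha ^ x" using a1 by simp
      have "1 / alpha\<^sup>2 * alpha ^ x \<le> f x" using lowb[of x] a1 by (simp add: field_simps)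
      thus "1 / alpha\<^sup>2 * norm (alpha ^ x) \<le> norm (f x) \<and> norm (f x) \<le> 1 * norm (alpha ^ x)"
        using fp ap up[of x] by simp
    qed
  qed
  thus "(\<lambda>n. real (num_induced_matchings {0..<n} path_adj)) \<in> \<Theta>(\<lambda>n. alpha ^ n)"
    unfolding f_def[abs_def] .
qed

end
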